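(* Let $\{a_n\}_{n=1}^\infty\subset(0,1]$ and define $P_n,Q_n:\{-1,1\}^n\to\mathbb{R}$ by $P_0\equiv Q_0\equiv 1$ and \[ P_{n+1}=P_n+\varepsilon_{n+1}a_{n+1}Q_n,\qquad Q_{n+1}=\varepsilon_{n+1}a_{n+1}P_n-Q_n,\qquad n=0,1,\dots \] Then for each $n=1,2,\dots$, \[ I(P_n)=I(Q_n)=\sum_{i=1}^n a_i^2\prod_{1\le j\le n,\ j\ne i}(1+a_j^2). \]
   Context: Here $\varepsilon_i$ denotes the $i$-th coordinate function $\varepsilon_i(\delta_1,\dots,\delta_m)=\delta_i$ on $\{-1,1\}^m$ for $m\ge i$ (functions on $\{-1,1\}^n$ are regarded as functions on $\{-1,1\}^{n+1}$ not depending on the last coordinate). For $A\subseteq[n]$, $W_A=\prod_{i\in A}\varepsilon_i$ and, for $g:\{-1,1\}^n\to\mathbb{R}$, $\hat g(A)=2^{-n}\sum_{\delta\in\{-1,1\}^n}g(\delta)W_A(\delta)$. The influence is $I(g)=\sum_{A\subseteq[n]}\hat g(A)^2|A|$. *)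

theory Defs
  imports "HOL-Analysis.Analysis"
begin

(* Points of {-1,1}^n are represented as functions delta :: nat => real with
   delta i in {-1,1} for 1 <= i <= n, and delta i = 1 elsewhere (canonical padding). *)
definition cube :: "nat \<Rightarrow> (nat \<Rightarrow> real) set" where
  "cube n = {\<delta>. (\<forall>i\<in>{1..n}. \<delta> i = 1 \<or> \<delta> i = -1) \<and> (\<forall>i. i \<notin> {1..n} \<longrightarrow> \<delta> i = 1)}"

definition eps :: "nat \<Rightarrow> (nat \<Rightarrow> real) \<Rightarrow> real" where
  "eps i \<delta> = \<delta> i"

definition walsh :: "nat set \<Rightarrow> (nat \<Rightarrow> real) \<Rightarrow> real" where
  "walsh A \<delta> = (\<Prod>i\<in>A. eps i \<delta>)"

definition fcoeff :: "nat \<Rightarrow> ((nat \<Rightarrow> real) \<Rightarrow> real) \<Rightarrow> nat set \<Rightarrow> real" where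
  "fcoeff n g A = (1 / 2 ^ n) * (\<Sum>\<delta>\<in>cube n. g \<delta> * walsh A \<delta>)"

definition influence :: "nat \<Rightarrow> ((nat \<Rightarrow> real) \<Rightarrow> real) \<Rightarrow> real" where
  "influence n g = (\<Sum>A\<in>Pow {1..n}. (fcoeff n g A)^2 * real (card A))"

fun PQ :: "(nat \<Rightarrow> real) \<Rightarrow> nat \<Rightarrow> ((nat \<Rightarrow> real) \<Rightarrow> real) \<times> ((nat \<Rightarrow> real) \<Rightarrow> real)" where
  "PQ a 0 = ((\<lambda>_. 1), (\<lambda>_. 1))"
| "PQ a (Suc n) = (let (P, Q) = PQ a n in
     ((\<lambda>\<delta>. P \<delta> + eps (Suc n) \<delta> * a (Suc n) * Q \<delta>),
      (\<lambda>\<delta>. eps (Suc n) \<delta> * a (Suc n) * P \<delta> - Q \<delta>)))"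

definition Pn :: "(nat \<Rightarrow> real) \<Rightarrow> nat \<Rightarrow> (nat \<Rightarrow> real) \<Rightarrow> real" where
  "Pn a n = fst (PQ a n)"

definition Qn :: "(nat \<Rightarrow> real) \<Rightarrow> nat \<Rightarrow> (nat \<Rightarrow> real) \<Rightarrow> real" where
  "Qn a n = snd (PQ a n)"

end

theory Submission imports Defs begin

definition upd :: "nat \<Rightarrow> (nat \<Rightarrow> real) \<Rightarrow> (nat \<Rightarrow> real)" where
  "upd n \<delta> = \<delta>(Suc n := -1)"

lemma cube_Suc: "cube (Suc n) = cube n \<union> upd n ` cube n"
proof (intro equalityI subsetI)
  fix \<delta> assume d: "\<delta> \<in> cube (Suc n)"
  show "\<delta> \<in> cube n \<union> upd n ` cube n"
  proof (cases "\<delta> (Suc n) = 1")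
    case True
    then have "\<delta> \<in> cube n" using d unfolding cube_def
      by (auto simp: le_Suc_eq)
    then show ?thesis by simp
  next
    case False
    then have m: "\<delta> (Suc n) = -1" using d unfolding cube_def by auto
    let ?e = "\<delta>(Suc n := 1)"
    have "?e \<in> cube n" using d unfolding cube_def by (auto simp: le_Suc_eq)
    moreover have "\<delta> = upd n ?e" using m by (auto simp: upd_def)
    ultimately show ?thesis by blast
  qed
next
  fix \<delta> assume "\<delta> \<in> cube n \<union> upd n ` cube n"
  then show "\<delta> \<in> cube (Suc n)" unfolding cube_def upd_def by (auto simp: le_Suc_eq; force)
qed

lemma cube_0: "cube 0 = {\<lambda>_. 1}"
  unfolding cube_def by auto

lemma cube_Suc_n: "\<delta> \<in> cube n \<Longrightarrow> \<delta> (Suc n) = 1"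
  unfolding cube_def by auto

lemma finite_cube: "finite (cube n)"
  by (induction n) (auto simp: cube_Suc cube_0)

lemma sum_cube_Suc:
  "(\<Sum>\<delta>\<in>cube (Suc n). f \<delta>) = (\<Sum>\<delta>\<in>cube n. f \<delta> + f (upd n \<delta>))"
proof -
  have disj: "cube n \<inter> upd n ` cube n = {}"
    using cube_Suc_n by (auto simp: upd_def) (metis fun_upd_same one_neq_neg_one)
  have inj: "inj_on (upd n) (cube n)"
  proof
    fix x y assume "x \<in> cube n" "y \<in> cube n" "upd n x = upd n y"
    then show "x = y" unfolding upd_def
      by (metis cube_Suc_n fun_upd_triv fun_upd_upd)
  qed
  have "(\<Sum>\<delta>\<in>cube (Suc n). f \<delta>) = (\<Sum>\<delta>\<in>cube n. f \<delta>) + (\<Sum>\<delta>\<in>upd n ` cube n. f \<delta>)"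
    unfolding cube_Suc by (rule sum.union_disjoint) (use finite_cube disj in auto)
  also have "(\<Sum>\<delta>\<in>upd n ` cube n. f \<delta>) = (\<Sum>\<delta>\<in>cube n. f (upd n \<delta>))"
    using sum.reindex[OF inj] by simp
  finally show ?thesis by (simp add: sum.distrib)
qed

lemma fcoeff_step:
  assumes g: "\<And>\<delta>. g (upd n \<delta>) = g \<delta>" and h: "\<And>\<delta>. h (upd n \<delta>) = h \<delta>"
    and A: "A \<subseteq> {1..Suc n}"
  shows "fcoeff (Suc n) (\<lambda>\<delta>. g \<delta> + eps (Suc n) \<delta> * h \<delta>) A
     = (if Suc n \<in> A then fcoeff n h (A - {Suc n}) else fcoeff n g A)"
proof -
  have fin: "finite A" using A finite_subset by blast
  let ?F = "\<lambda>\<delta>. g \<delta> + eps (Suc n) \<delta> * h \<delta>"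
  have "fcoeff (Suc n) ?F A = 1 / 2 ^ Suc n * (\<Sum>\<delta>\<in>cube n. ?F \<delta> * walsh A \<delta> + ?F (upd n \<delta>) * walsh A (upd n \<delta>))"
    unfolding fcoeff_def sum_cube_Suc ..
  show ?thesis
  proof (cases "Suc n \<in> A")
    case True
    have "\<And>\<delta>. \<delta> \<in> cube n \<Longrightarrow> ?F \<delta> * walsh A \<delta> + ?F (upd n \<delta>) * walsh A (upd n \<delta>)
        = 2 * (h \<delta> * walsh (A - {Suc n}) \<delta>)"
    proof -
      fix \<delta> assume d: "\<delta> \<in> cube n"
      have w1: "walsh A \<delta> = walsh (A - {Suc n}) \<delta>"
        unfolding walsh_def using prod.remove[OF fin True, of "\<lambda>i. eps i \<delta>"] cube_Suc_n[OF d]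
        by (simp add: eps_def)
      have w2: "walsh A (upd n \<delta>) = - walsh (A - {Suc n}) \<delta>"
      proof -
        have "walsh A (upd n \<delta>) = eps (Suc n) (upd n \<delta>) * walsh (A - {Suc n}) (upd n \<delta>)"
          unfolding walsh_def using prod.remove[OF fin True, of "\<lambda>i. eps i (upd n \<delta>)"] by simp
        also have "walsh (A - {Suc n}) (upd n \<delta>) = walsh (A - {Suc n}) \<delta>"
          unfolding walsh_def by (rule prod.cong) (auto simp: eps_def upd_def)
        moreover have "eps (Suc n) (upd n \<delta>) = -1" by (simp add: eps_def upd_def)
        ultimately show ?thesis by simp
      qed
      show "?thesis \<delta>" using w1 w2 g h cube_Suc_n[OF d]
        by (simp add: eps_def upd_def algebra_simps)
    qed
    then show ?thesis using True
      unfolding fcoeff_def sum_cube_Suc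
      by (simp add: sum_distrib_left[symmetric])
  next
    case False
    have "\<And>\<delta>. \<delta> \<in> cube n \<Longrightarrow> ?F \<delta> * walsh A \<delta> + ?F (upd n \<delta>) * walsh A (upd n \<delta>)
        = 2 * (g \<delta> * walsh A \<delta>)"
    proof -
      fix \<delta> assume d: "\<delta> \<in> cube n"
      have w2: "walsh A (upd n \<delta>) = walsh A \<delta>"
        unfolding walsh_def using False by (intro prod.cong) (auto simp: eps_def upd_def)
      show "?thesis \<delta>" using w2 g h cube_Suc_n[OF d]
        by (simp add: eps_def upd_def algebra_simps)
    qed
    then show ?thesis using False
      unfolding fcoeff_def sum_cube_Suc
      by (simp add: sum_distrib_left[symmetric])
  qed
qed


definition sqn :: "nat \<Rightarrow> ((nat \<Rightarrow> real) \<Rightarrow> real) \<Rightarrow> real" where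
  "sqn n g = (\<Sum>A\<in>Pow {1..n}. (fcoeff n g A)^2)"

lemma fcoeff_scale: "fcoeff n (\<lambda>\<delta>. c * h \<delta>) A = c * fcoeff n h A"
  unfolding fcoeff_def by (simp add: sum_distrib_left algebra_simps)

lemma influence_scale: "influence n (\<lambda>\<delta>. c * h \<delta>) = c^2 * influence n h"
  unfolding influence_def fcoeff_scale by (simp add: sum_distrib_left power_mult_distrib algebra_simps)

lemma sqn_scale: "sqn n (\<lambda>\<delta>. c * h \<delta>) = c^2 * sqn n h"
  unfolding sqn_def fcoeff_scale by (simp add: sum_distrib_left power_mult_distrib algebra_simps)

lemma Pow_Suc: "Pow {1..Suc n} = Pow {1..n} \<union> insert (Suc n) ` Pow {1..n}"
proof -
  have "{1..Suc n} = insert (Suc n) {1..n}" by auto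
  then show ?thesis by (simp add: Pow_insert)
qed

lemma sum_Pow_Suc:
  "(\<Sum>A\<in>Pow {1..Suc n}. f A) = (\<Sum>A\<in>Pow {1..n}. f A) + (\<Sum>B\<in>Pow {1..n}. f (insert (Suc n) B))"
proof -
  have disj: "Pow {1..n} \<inter> insert (Suc n) ` Pow {1..n} = {}" by auto
  have inj: "inj_on (insert (Suc n)) (Pow {1..n})"
    by (rule inj_onI) (metis PowD atLeastAtMost_iff insert_ident not_less_eq_eq order_refl subsetD)
  have "(\<Sum>A\<in>Pow {1..Suc n}. f A) = (\<Sum>A\<in>Pow {1..n}. f A) + (\<Sum>A\<in>insert (Suc n) ` Pow {1..n}. f A)"
    unfolding Pow_Suc by (rule sum.union_disjoint) (use disj in auto)
  also have "(\<Sum>A\<in>insert (Suc n) ` Pow {1..n}. f A) = (\<Sum>B\<in>Pow {1..n}. f (insert (Suc n) B))"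
    by (rule sum.reindex[OF inj, unfolded comp_def])
  finally show ?thesis .
qed

lemma step_both:
  assumes g: "\<And>\<delta>. g (upd n \<delta>) = g \<delta>" and h: "\<And>\<delta>. h (upd n \<delta>) = h \<delta>"
  shows "influence (Suc n) (\<lambda>\<delta>. g \<delta> + eps (Suc n) \<delta> * h \<delta>) = influence n g + influence n h + sqn n h"
    and "sqn (Suc n) (\<lambda>\<delta>. g \<delta> + eps (Suc n) \<delta> * h \<delta>) = sqn n g + sqn n h"
proof -
  have c1: "\<And>A. A \<in> Pow {1..n} \<Longrightarrow> fcoeff (Suc n) (\<lambda>\<delta>. g \<delta> + eps (Suc n) \<delta> * h \<delta>) A = fcoeff n g A"
    by (subst fcoeff_step[of g n h, OF g h]) auto
  have c2: "\<And>B. B \<in> Pow {1..n} \<Longrightarrow> fcoeff (Suc n) (\<lambda>\<delta>. g \<delta> + eps (Suc n) \<delta> * h \<delta>) (insert (Suc n) B) = fcoeff n h B"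
  proof -
    fix B assume B: "B \<in> Pow {1..n}"
    then have "Suc n \<notin> B" by auto
    then have "insert (Suc n) B - {Suc n} = B" by auto
    then show "?thesis B" using B by (subst fcoeff_step[of g n h, OF g h]) auto
  qed
  have cd: "\<And>B. B \<in> Pow {1..n} \<Longrightarrow> card (insert (Suc n) B) = card B + 1"
  proof -
    fix B assume B: "B \<in> Pow {1..n}"
    then have "Suc n \<notin> B" "finite B" using finite_subset by auto
    then show "card (insert (Suc n) B) = card B + 1" by simp
  qed
  let ?F = "\<lambda>\<delta>. g \<delta> + eps (Suc n) \<delta> * h \<delta>"
  have e1: "(\<Sum>A\<in>Pow {1..n}. (fcoeff (Suc n) ?F A)^2 * real (card A)) = influence n g"
    unfolding influence_def by (rule sum.cong) (simp_all add: c1)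
  have e2: "(\<Sum>A\<in>Pow {1..n}. (fcoeff (Suc n) ?F (insert (Suc n) A))^2 * real (card (insert (Suc n) A))) = influence n h + sqn n h"
    unfolding influence_def sqn_def sum.distrib[symmetric] by (rule sum.cong) (simp_all add: c2 cd distrib_left distrib_right)
  show "influence (Suc n) ?F = influence n g + influence n h + sqn n h"
    using e1 e2 unfolding influence_def[of "Suc n"] sum_Pow_Suc by simp
  show "sqn (Suc n) (\<lambda>\<delta>. g \<delta> + eps (Suc n) \<delta> * h \<delta>) = sqn n g + sqn n h"
  proof -
    have f1: "(\<Sum>A\<in>Pow {1..n}. (fcoeff (Suc n) ?F A)^2) = sqn n g"
      unfolding sqn_def by (rule sum.cong) (simp_all add: c1)
    have f2: "(\<Sum>A\<in>Pow {1..n}. (fcoeff (Suc n) ?F (insert (Suc n) A))^2) = sqn n h"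
      unfolding sqn_def by (rule sum.cong) (simp_all add: c2)
    show ?thesis using f1 f2 unfolding sqn_def[of "Suc n"] sum_Pow_Suc by simp
  qed
qed

lemma Pn_0: "Pn a 0 = (\<lambda>_. 1)" and Qn_0: "Qn a 0 = (\<lambda>_. 1)"
  by (simp_all add: Pn_def Qn_def)

lemma Pn_Suc: "Pn a (Suc n) = (\<lambda>\<delta>. Pn a n \<delta> + eps (Suc n) \<delta> * (a (Suc n) * Qn a n \<delta>))"
  by (simp add: Pn_def Qn_def split_beta algebra_simps)

lemma Qn_Suc: "Qn a (Suc n) = (\<lambda>\<delta>. (-1) * Qn a n \<delta> + eps (Suc n) \<delta> * (a (Suc n) * Pn a n \<delta>))"
  by (simp add: Pn_def Qn_def split_beta algebra_simps)

lemma indep: "n < k \<Longrightarrow> Pn a n (\<delta>(k := x)) = Pn a n \<delta> \<and> Qn a n (\<delta>(k := x)) = Qn a n \<delta>"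
  by (induction n arbitrary: \<delta>) (auto simp: Pn_0 Qn_0 Pn_Suc Qn_Suc eps_def)

lemma indepP: "Pn a n (upd n \<delta>) = Pn a n \<delta>" and indepQ: "Qn a n (upd n \<delta>) = Qn a n \<delta>"
  using indep[of n "Suc n" a \<delta> "-1"] by (auto simp: upd_def)

lemma influence_0: "influence 0 g = 0"
  unfolding influence_def by simp

lemma sqn_0: "sqn 0 (\<lambda>_. 1) = 1"
  unfolding sqn_def fcoeff_def by (simp add: cube_0 walsh_def)

lemma main:
  "sqn n (Pn a n) = (\<Prod>j\<in>{1..n}. 1 + (a j)^2) \<and> sqn n (Qn a n) = (\<Prod>j\<in>{1..n}. 1 + (a j)^2)
   \<and> influence n (Pn a n) = (\<Sum>i=1..n. (a i)^2 * (\<Prod>j\<in>{1..n}-{i}. 1 + (a j)^2))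
   \<and> influence n (Qn a n) = (\<Sum>i=1..n. (a i)^2 * (\<Prod>j\<in>{1..n}-{i}. 1 + (a j)^2))"
proof (induction n)
  case 0
  then show ?case by (simp add: Pn_0 Qn_0 sqn_0 influence_0)
next
  case (Suc n)
  let ?c = "a (Suc n)"
  let ?Pr = "\<lambda>m. (\<Prod>j\<in>{1..m}. 1 + (a j)^2)"
  let ?f = "\<lambda>m. (\<Sum>i=1..m. (a i)^2 * (\<Prod>j\<in>{1..m}-{i}. 1 + (a j)^2))"
  have hP: "\<And>\<delta>. (\<lambda>\<delta>. ?c * Pn a n \<delta>) (upd n \<delta>) = (\<lambda>\<delta>. ?c * Pn a n \<delta>) \<delta>" by (simp add: indepP)
  have hQ: "\<And>\<delta>. (\<lambda>\<delta>. ?c * Qn a n \<delta>) (upd n \<delta>) = (\<lambda>\<delta>. ?c * Qn a n \<delta>) \<delta>" by (simp add: indepQ)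
  have gQ: "\<And>\<delta>. (\<lambda>\<delta>. (-1) * Qn a n \<delta>) (upd n \<delta>) = (\<lambda>\<delta>. (-1) * Qn a n \<delta>) \<delta>" by (simp add: indepQ)
  have gP: "\<And>\<delta>. Pn a n (upd n \<delta>) = Pn a n \<delta>" by (rule indepP)
  have prS: "?Pr (Suc n) = (1 + ?c^2) * ?Pr n"
    by (simp add: prod.nat_ivl_Suc')
  have fS: "?f (Suc n) = (1 + ?c^2) * ?f n + ?c^2 * ?Pr n"
  proof -
    have "?f (Suc n) = (\<Sum>i=1..n. (a i)^2 * (\<Prod>j\<in>{1..Suc n}-{i}. 1 + (a j)^2)) + ?c^2 * (\<Prod>j\<in>{1..Suc n}-{Suc n}. 1 + (a j)^2)"
      by (simp add: sum.nat_ivl_Suc')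
    also have "(\<Prod>j\<in>{1..Suc n}-{Suc n}. 1 + (a j)^2) = ?Pr n"
      by (intro prod.cong) auto
    also have "(\<Sum>i=1..n. (a i)^2 * (\<Prod>j\<in>{1..Suc n}-{i}. 1 + (a j)^2)) = (1 + ?c^2) * ?f n"
    proof -
      have "\<And>i. i \<in> {1..n} \<Longrightarrow> (\<Prod>j\<in>{1..Suc n}-{i}. 1 + (a j)^2) = (1 + ?c^2) * (\<Prod>j\<in>{1..n}-{i}. 1 + (a j)^2)"
      proof -
        fix i assume i: "i \<in> {1..n}"
        have "{1..Suc n}-{i} = insert (Suc n) ({1..n}-{i})" using i by auto
        then show "?thesis i" by simp
      qed
      then have "(\<Sum>i=1..n. (a i)^2 * (\<Prod>j\<in>{1..Suc n}-{i}. 1 + (a j)^2)) = (\<Sum>i=1..n. (1 + ?c^2) * ((a i)^2 * (\<Prod>j\<in>{1..n}-{i}. 1 + (a j)^2)))"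
        by (intro sum.cong) auto
      then show ?thesis by (simp add: sum_distrib_left)
    qed
    finally show ?thesis by simp
  qed
  have sP: "sqn (Suc n) (Pn a (Suc n)) = ?Pr (Suc n)"
    unfolding Pn_Suc step_both(2)[where g="Pn a n" and h="\<lambda>\<delta>. ?c * Qn a n \<delta>", OF gP hQ] sqn_scale using Suc.IH prS by (simp add: algebra_simps)
  have sQ: "sqn (Suc n) (Qn a (Suc n)) = ?Pr (Suc n)"
    unfolding Qn_Suc step_both(2)[where g="\<lambda>\<delta>. (-1) * Qn a n \<delta>" and h="\<lambda>\<delta>. ?c * Pn a n \<delta>", OF gQ hP] sqn_scale using Suc.IH prS by (simp add: algebra_simps)
  have iP: "influence (Suc n) (Pn a (Suc n)) = ?f (Suc n)"
    unfolding Pn_Suc step_both(1)[where g="Pn a n" and h="\<lambda>\<delta>. ?c * Qn a n \<delta>", OF gP hQ] sqn_scale influence_scale using Suc.IH fS by (simp add: algebra_simps)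
  have iQ: "influence (Suc n) (Qn a (Suc n)) = ?f (Suc n)"
    unfolding Qn_Suc step_both(1)[where g="\<lambda>\<delta>. (-1) * Qn a n \<delta>" and h="\<lambda>\<delta>. ?c * Pn a n \<delta>", OF gQ hP] sqn_scale influence_scale using Suc.IH fS by (simp add: algebra_simps)
  show ?case using sP sQ iP iQ by blast
qed

theorem proposition2:
  fixes a :: "nat \<Rightarrow> real" and n :: nat
  assumes "\<And>k. k \<ge> 1 \<Longrightarrow> 0 < a k \<and> a k \<le> 1"
    and "n \<ge> 1"
  shows "influence n (Pn a n) = (\<Sum>i=1..n. (a i)^2 * (\<Prod>j\<in>{1..n}-{i}. 1 + (a j)^2))
       \<and> influence n (Qn a n) = (\<Sum>i=1..n. (a i)^2 * (\<Prod>j\<in>{1..n}-{i}. 1 + (a j)^2))"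
  using main[of n a] by blast

end
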